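(* Under the standing assumptions and Assumption A, there exist $\zeta<1$ and $K=K(\zeta)>0$ such that for all integers $a_1>K$ and all $m\in\mathbb N$, $$\sum_{\substack{a=a_1a_2\cdots a_m:\ |a|=m,\\ a\ \text{is } a_1\text{-conservative}}}\mathbb P\big(a\text{ has at least } a_1\text{ children before }\varnothing\text{ explodes}\big)\le \zeta^{m-1}\,\mathcal M_{\lambda_{a_1}}(Y_{a_1})\,\mathbb E\big[\mathcal L_{\lambda_{a_1}}(\mathcal P_{a_1};W)\big],$$ where the sum is over all $a\in\mathbb N^m$ with first entry equal to the given $a_1$, and $(\lambda_n)$, $(Y_n)$ are as in Assumption A.
   Context: Setting: an $(X,W)$-CMJ process on the Ulam–Harris tree $\mathcal U_\infty=\bigcup_{n\ge0}\mathbb N^n$ with weights $W_u\in S$, inter-birth times $X(uj)$, birth times $\mathcal B(\varnothing)=0$, $\mathcal B(ui)=\mathcal B(u)+\sum_{j\le i}X(uj)$, $\mathcal P_i(u)=\sum_{j=1}^iX(uj)$, $\mathcal P(u)=\sum_{j\ge1}X(uj)$, $\mathcal P_i$ a copy of $\mathcal P_i(\varnothing)$, $X(i)=X(\varnothing i)$, $W=W_\varnothing$. Standing assumptions: $((X(uj))_j,W_u)$ i.i.d. over $u$; conditionally on $W_u=w$ the $X_w(ui)$, $i\in\mathbb N$, are independent. $\mathcal M_\lambda(Y)=\mathbb E[e^{\lambda Y}]$, $\mathcal L_\lambda(Z;W)=\mathbb E[e^{-\lambda Z}\mid W]$. Assumption A: (1) positive finite-mean $Y_n$ with $\sum_{i>n}X_w(i)$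 stochastically dominated by $Y_n$ for all $w\in S$; (2) an increasing $(\lambda_n)\subset(0,\infty)$, $\lambda_n\to\infty$, with $\sum_n\mathcal M_{\lambda_n}(Y_n)\mathbb E[\mathcal L_{\lambda_n}(\mathcal P_n(\varnothing);W)]<\infty$; (3) $\mathbb E[\sup\{k:X(k)=0\}]<1$ and a.s. $\sum_{i>n}X(i)>0$ for all $n$. Terminology: "$a$ has at least $k$ children before $b$ explodes" means $\mathcal B(a)+\mathcal P_k(a)<\mathcal B(b)+\mathcal P(b)$. A sequence $a=a_1\cdots a_m$ is $a_1$-conservative if $a_j\le a_1$ for all $j\in\{2,\dots,m\}$. *)

theory Defs
  imports "HOL-Probability.Probability"
begin

definition tree_nodes :: "nat list set" where
  "tree_nodes = {u. \<forall>a\<in>set u. 1 \<le> a}"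

text \<open>Birth time B(u): B([]) = 0, B(u i) = B(u) + sum_{j \<le> i} X(u j).\<close>
definition birth :: "(nat list \<Rightarrow> 'a \<Rightarrow> real) \<Rightarrow> nat list \<Rightarrow> 'a \<Rightarrow> real" where
  "birth X u \<omega> = (\<Sum>k<length u. \<Sum>j=1..u!k. X (take k u @ [j]) \<omega>)"

definition partial_prog :: "(nat list \<Rightarrow> 'a \<Rightarrow> real) \<Rightarrow> nat list \<Rightarrow> nat \<Rightarrow> 'a \<Rightarrow> real" where
  "partial_prog X u k \<omega> = (\<Sum>j=1..k. X (u @ [j]) \<omega>)"

definition total_prog :: "(nat list \<Rightarrow> 'a \<Rightarrow> real) \<Rightarrow> nat list \<Rightarrow> 'a \<Rightarrow> ennreal" where
  "total_prog X u \<omega> = (\<Sum>j. ennreal (X (u @ [Suc j]) \<omega>))"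

text \<open>a has at least k children before b explodes: B(a) + P_k(a) < B(b) + P(b).\<close>
definition children_before :: "(nat list \<Rightarrow> 'a \<Rightarrow> real) \<Rightarrow> nat list \<Rightarrow> nat \<Rightarrow> nat list \<Rightarrow> 'a \<Rightarrow> bool" where
  "children_before X a k b \<omega> \<longleftrightarrow>
     ennreal (birth X a \<omega> + partial_prog X a k \<omega>) < ennreal (birth X b \<omega>) + total_prog X b \<omega>"

definition conservative :: "nat list \<Rightarrow> bool" where
  "conservative a \<longleftrightarrow> a \<noteq> [] \<and> (\<forall>j\<in>set (tl a). j \<le> hd a)"

definition child_seq :: "(nat list \<Rightarrow> 'a \<Rightarrow> real) \<Rightarrow> nat list \<Rightarrow> 'a \<Rightarrow> nat \<Rightarrow> real" where
  "child_seq X u \<omega> = (\<lambda>j. X (u @ [Suc j]) \<omega>)"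

definition mgf :: "'b measure \<Rightarrow> ('b \<Rightarrow> real) \<Rightarrow> real \<Rightarrow> ennreal" where
  "mgf MY Y l = (\<integral>\<^sup>+ y. ennreal (exp (l * Y y)) \<partial>MY)"

text \<open>L_lambda(P_n; W) evaluated at W = w, via the conditional law kern w of
  (X(j))_{j \<ge> 1} given W = w (0-based sequence).\<close>
definition cond_laplace :: "('s \<Rightarrow> (nat \<Rightarrow> real) measure) \<Rightarrow> real \<Rightarrow> nat \<Rightarrow> 's \<Rightarrow> ennreal" where
  "cond_laplace kern l n w = (\<integral>\<^sup>+ x. ennreal (exp (- l * (\<Sum>j<n. x j))) \<partial>(kern w))"

text \<open>Standing assumptions of the (X,W)-CMJ process.  kern w is the conditional law of the
  child sequence (X(j))_j given W = w; the last condition says that, conditionally on W = w,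
  the X_w(i) are independent.\<close>
definition cmj_standing ::
  "'a measure \<Rightarrow> 's measure \<Rightarrow> ('s \<Rightarrow> (nat \<Rightarrow> real) measure) \<Rightarrow>
   (nat list \<Rightarrow> 'a \<Rightarrow> 's) \<Rightarrow> (nat list \<Rightarrow> 'a \<Rightarrow> real) \<Rightarrow> bool" where
  "cmj_standing M S kern W X \<longleftrightarrow>
     prob_space M \<and>
     (\<forall>u\<in>tree_nodes. W u \<in> M \<rightarrow>\<^sub>M S) \<and>
     (\<forall>u\<in>tree_nodes. X u \<in> borel_measurable M) \<and>
     (\<forall>u\<in>tree_nodes. \<forall>\<omega>. 0 \<le> X u \<omega>) \<and>
     prob_space.indep_vars M (\<lambda>_. S \<Otimes>\<^sub>M PiM UNIV (\<lambda>_. borel))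
        (\<lambda>u \<omega>. (W u \<omega>, child_seq X u \<omega>)) tree_nodes \<and>
     (\<forall>u\<in>tree_nodes.
        distr M (S \<Otimes>\<^sub>M PiM UNIV (\<lambda>_. borel)) (\<lambda>\<omega>. (W u \<omega>, child_seq X u \<omega>)) =
        distr M (S \<Otimes>\<^sub>M PiM UNIV (\<lambda>_. borel)) (\<lambda>\<omega>. (W [] \<omega>, child_seq X [] \<omega>))) \<and>
     kern \<in> S \<rightarrow>\<^sub>M prob_algebra (PiM UNIV (\<lambda>_. borel)) \<and>
     distr M (S \<Otimes>\<^sub>M PiM UNIV (\<lambda>_. borel)) (\<lambda>\<omega>. (W [] \<omega>, child_seq X [] \<omega>)) =
       bind (distr M S (W [])) (\<lambda>w. distr (kern w) (S \<Otimes>\<^sub>M PiM UNIV (\<lambda>_. borel)) (\<lambda>x. (w, x))) \<and>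
     (\<forall>w\<in>space S. kern w = PiM UNIV (\<lambda>j. distr (kern w) borel (\<lambda>x. x j)))"

definition assumption_A ::
  "'a measure \<Rightarrow> 's measure \<Rightarrow> ('s \<Rightarrow> (nat \<Rightarrow> real) measure) \<Rightarrow>
   (nat list \<Rightarrow> 'a \<Rightarrow> 's) \<Rightarrow> (nat list \<Rightarrow> 'a \<Rightarrow> real) \<Rightarrow>
   'b measure \<Rightarrow> (nat \<Rightarrow> 'b \<Rightarrow> real) \<Rightarrow> (nat \<Rightarrow> real) \<Rightarrow> bool" where
  "assumption_A M S kern W X MY Y lam \<longleftrightarrow>
     prob_space MY \<and>
     \<comment> \<open>(1)\<close>
     (\<forall>n\<ge>1. Y n \<in> borel_measurable MY \<and> (\<forall>y\<in>space MY. 0 < Y n y) \<and> integrable MY (Y n) \<and>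
        (\<forall>w\<in>space S. \<forall>t::real.
           emeasure (kern w) {x\<in>space (kern w). ennreal t < (\<Sum>i. ennreal (x (i + n)))}
             \<le> emeasure MY {y\<in>space MY. t < Y n y})) \<and>
     \<comment> \<open>(2)\<close>
     (\<forall>n\<ge>1. 0 < lam n) \<and> (\<forall>n m. 1 \<le> n \<longrightarrow> n < m \<longrightarrow> lam n < lam m) \<and>
     filterlim lam at_top sequentially \<and>
     (\<Sum>n. mgf MY (Y (Suc n)) (lam (Suc n)) *
            (\<integral>\<^sup>+ w. cond_laplace kern (lam (Suc n)) (Suc n) w \<partial>(distr M S (W [])))) < \<infinity> \<and>
     \<comment> \<open>(3)\<close>
     (\<integral>\<^sup>+ \<omega>. Sup {ennreal (real k) | k. 1 \<le> k \<and> X [k] \<omega> = 0} \<partial>M) < 1 \<and>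
     (AE \<omega> in M. \<forall>n. 0 < (\<Sum>i. ennreal (X [i + n + 1] \<omega>)))"

end

theory Submission
  imports Defs
begin


abbreviation "SSp S \<equiv> S \<Otimes>\<^sub>M PiM UNIV (\<lambda>_::nat. (borel::real measure))"

definition eG :: "real \<Rightarrow> ennreal \<Rightarrow> ennreal" where
  "eG l t = (if t = top then top else ennreal (exp (l * enn2real t)))"

lemma eG_meas[measurable]: "eG l \<in> borel_measurable borel"
  unfolding eG_def by measurable

lemma lborel_Ici: "emeasure lborel {0::real..} = top"
proof (rule ccontr)
  assume "emeasure lborel {0::real..} \<noteq> top"
  then have "emeasure lborel {0::real..} < top" by (simp add: less_top)
  then obtain n where n: "emeasure lborel {0::real..} < of_nat n" using ennreal_Ex_less_of_nat by blast
  have "emeasure lborel {0::real..real n} \<le> emeasure lborel {0::real..}" by (rule emeasure_mono) auto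
  with n show False by (simp add: ennreal_of_nat_eq_real_of_nat)
qed

lemma PW:
  assumes l: "0 < l"
  shows "eG l t = 1 + (\<integral>\<^sup>+ s. ennreal (l * exp (l * s)) * indicator {0..} s * indicator {s. ennreal s < t} s \<partial>lborel)"
proof (cases t)
  case (real r)
  then have r: "0 \<le> r" "t = ennreal r" by auto
  have "(\<integral>\<^sup>+ s. ennreal (l * exp (l * s)) * indicator {0..} s * indicator {s. ennreal s < t} s \<partial>lborel)
      = (\<integral>\<^sup>+ s. ennreal (l * exp (l * s)) * indicator {0..r} s \<partial>lborel)"
  proof (rule nn_integral_cong_AE)
    show "AE s in lborel. ennreal (l * exp (l * s)) * indicator {0..} s * indicator {s. ennreal s < t} s
       = ennreal (l * exp (l * s)) * indicator {0..r} s"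
      using AE_lborel_singleton[of r]
    proof eventually_elim
      case (elim s)
      then show ?case using r
        by (auto simp: indicator_def ennreal_less_iff)
    qed
  qed
  also have "\<dots> = ennreal (exp (l * r) - exp (l * 0))"
    by (rule nn_integral_FTC_Icc) (use r l in \<open>auto intro!: derivative_eq_intros\<close>)
  finally have 1: "(\<integral>\<^sup>+ s. ennreal (l * exp (l * s)) * indicator {0..} s * indicator {s. ennreal s < t} s \<partial>lborel)
      = ennreal (exp (l * r) - 1)" by simp
  have "exp (l * r) \<ge> 1" using l r by simp
  then have "ennreal (exp (l * r)) = 1 + ennreal (exp (l * r) - 1)"
    using ennreal_plus[of 1 "exp (l * r) - 1"] by simp
  then show ?thesis using 1 r by (simp add: eG_def)
next
  case top
  have "(\<integral>\<^sup>+ s. ennreal l * indicator {0..} (s::real) \<partial>lborel)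
       \<le> (\<integral>\<^sup>+ s. ennreal (l * exp (l * s)) * indicator {0..} s * indicator {s. ennreal s < t} s \<partial>lborel)"
  proof (rule nn_integral_mono)
    fix s :: real
    show "ennreal l * indicator {0..} s \<le> ennreal (l * exp (l * s)) * indicator {0..} s * indicator {s. ennreal s < t} s"
      using top l by (auto simp: indicator_def intro!: ennreal_leI)
  qed
  moreover have "(\<integral>\<^sup>+ s. ennreal l * indicator {0..} (s::real) \<partial>lborel) = top"
    using l by (simp add: nn_integral_cmult lborel_Ici ennreal_mult_top)
  ultimately show ?thesis using top by (simp add: eG_def top_unique)
qed

lemma LC:
  assumes N: "prob_space N" and f[measurable]: "f \<in> borel_measurable N" and l: "0 < l"
  shows "(\<integral>\<^sup>+ x. eG l (f x) \<partial>N) = 1 + (\<integral>\<^sup>+ s. ennreal (l * exp (l * s)) * indicator {0..} s * emeasure N {x\<in>space N. ennreal s < f x} \<partial>lborel)"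
proof -
  interpret N: prob_space N by (rule N)
  interpret pair_sigma_finite N lborel ..
  have "(\<integral>\<^sup>+ x. eG l (f x) \<partial>N) = (\<integral>\<^sup>+ x. 1 + (\<integral>\<^sup>+ s. ennreal (l * exp (l * s)) * indicator {0..} s * indicator {s. ennreal s < f x} s \<partial>lborel) \<partial>N)"
    using PW[OF l] by simp
  also have "\<dots> = 1 + (\<integral>\<^sup>+ x. (\<integral>\<^sup>+ s. ennreal (l * exp (l * s)) * indicator {0..} s * indicator {s. ennreal s < f x} s \<partial>lborel) \<partial>N)"
    by (subst nn_integral_add) (auto simp: N.emeasure_space_1)
  also have "(\<integral>\<^sup>+ x. (\<integral>\<^sup>+ s. ennreal (l * exp (l * s)) * indicator {0..} s * indicator {s. ennreal s < f x} s \<partial>lborel) \<partial>N)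
     = (\<integral>\<^sup>+ s. (\<integral>\<^sup>+ x. ennreal (l * exp (l * s)) * indicator {0..} s * indicator {s. ennreal s < f x} s \<partial>N) \<partial>lborel)"
    by (rule Fubini'[symmetric]) measurable
  also have "\<dots> = (\<integral>\<^sup>+ s. ennreal (l * exp (l * s)) * indicator {0..} s * emeasure N {x\<in>space N. ennreal s < f x} \<partial>lborel)"
  proof (rule nn_integral_cong)
    fix s :: real
    have "(\<integral>\<^sup>+ x. ennreal (l * exp (l * s)) * indicator {0..} s * indicator {s. ennreal s < f x} s \<partial>N)
       = ennreal (l * exp (l * s)) * indicator {0..} s * (\<integral>\<^sup>+ x. indicator {x\<in>space N. ennreal s < f x} x \<partial>N)"
      by (subst nn_integral_cmult[symmetric]) (auto intro!: nn_integral_cong simp: indicator_def)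
    then show "(\<integral>\<^sup>+ x. ennreal (l * exp (l * s)) * indicator {0..} s * indicator {s. ennreal s < f x} s \<partial>N)
       = ennreal (l * exp (l * s)) * indicator {0..} s * emeasure N {x\<in>space N. ennreal s < f x}"
      by simp
  qed
  finally show ?thesis .
qed

lemma DOM:
  assumes N: "prob_space N" and Q: "prob_space Q" and f[measurable]: "f \<in> borel_measurable N"
    and g[measurable]: "g \<in> borel_measurable Q" and gpos: "\<And>y. y \<in> space Q \<Longrightarrow> 0 \<le> g y" and l: "0 < l"
    and dom: "\<And>t. emeasure N {x\<in>space N. ennreal t < f x} \<le> emeasure Q {y\<in>space Q. t < g y}"
  shows "(\<integral>\<^sup>+ x. eG l (f x) \<partial>N) \<le> (\<integral>\<^sup>+ y. ennreal (exp (l * g y)) \<partial>Q)"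
proof -
  have "(\<integral>\<^sup>+ y. ennreal (exp (l * g y)) \<partial>Q) = (\<integral>\<^sup>+ y. eG l (ennreal (g y)) \<partial>Q)"
    using gpos by (intro nn_integral_cong) (simp add: eG_def)
  also have "\<dots> = 1 + (\<integral>\<^sup>+ s. ennreal (l * exp (l * s)) * indicator {0..} s * emeasure Q {x\<in>space Q. ennreal s < ennreal (g x)} \<partial>lborel)"
    by (rule LC[OF Q _ l]) measurable
  also have "\<dots> = 1 + (\<integral>\<^sup>+ s. ennreal (l * exp (l * s)) * indicator {0..} s * emeasure Q {x\<in>space Q. s < g x} \<partial>lborel)"
    by (intro arg_cong2[where f="(+)"] refl nn_integral_cong)
       (auto simp: indicator_def ennreal_less_iff intro!: arg_cong2[where f=emeasure])
  finally have eq: "(\<integral>\<^sup>+ y. ennreal (exp (l * g y)) \<partial>Q) = \<dots>" .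
  show ?thesis
    unfolding LC[OF N f l] eq
    by (intro add_left_mono nn_integral_mono mult_left_mono dom) auto
qed

locale cmj =
  fixes M :: "'a measure" and S :: "'s measure" and kern :: "'s \<Rightarrow> (nat \<Rightarrow> real) measure"
    and W :: "nat list \<Rightarrow> 'a \<Rightarrow> 's" and X :: "nat list \<Rightarrow> 'a \<Rightarrow> real"
  assumes std: "cmj_standing M S kern W X"
begin

definition "Z u = (\<lambda>\<omega>. (W u \<omega>, child_seq X u \<omega>))"

lemma prob: "prob_space M" using std by (simp add: cmj_standing_def)

sublocale P: prob_space M by (rule prob)

lemma indep: "P.indep_vars (\<lambda>_. SSp S) Z tree_nodes"
  using std by (simp add: cmj_standing_def Z_def[abs_def])

lemma Z_meas: "u \<in> tree_nodes \<Longrightarrow> Z u \<in> M \<rightarrow>\<^sub>M SSp S"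
  using indep by (auto simp: P.indep_vars_def)

lemma Z_distr: "u \<in> tree_nodes \<Longrightarrow> distr M (SSp S) (Z u) = distr M (SSp S) (Z [])"
  using std by (simp add: cmj_standing_def Z_def[abs_def])

lemma nil_tree: "[] \<in> tree_nodes" by (simp add: tree_nodes_def)

lemma kern_meas: "kern \<in> S \<rightarrow>\<^sub>M prob_algebra (PiM UNIV (\<lambda>_. borel))"
  using std by (simp add: cmj_standing_def)

lemma bind_eq: "distr M (SSp S) (Z []) =
       bind (distr M S (W [])) (\<lambda>w. distr (kern w) (SSp S) (\<lambda>x. (w, x)))"
  using std by (simp add: cmj_standing_def Z_def[abs_def])

lemma W_meas: "W [] \<in> M \<rightarrow>\<^sub>M S"
  using std nil_tree by (simp add: cmj_standing_def)

lemma kern_prob: "w \<in> space S \<Longrightarrow> prob_space (kern w)"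
  using measurable_space[OF kern_meas] by (auto simp: space_prob_algebra)

lemma kern_sets: "w \<in> space S \<Longrightarrow> sets (kern w) = sets (PiM UNIV (\<lambda>_. borel))"
  using measurable_space[OF kern_meas] by (auto simp: space_prob_algebra)

lemma X_nonneg: "u \<in> tree_nodes \<Longrightarrow> 0 \<le> X u \<omega>"
  using std by (simp add: cmj_standing_def)

lemma law: 
  assumes u: "u \<in> tree_nodes" and f[measurable]: "f \<in> borel_measurable (PiM UNIV (\<lambda>_::nat. (borel::real measure)))"
  shows "(\<integral>\<^sup>+\<omega>. f (child_seq X u \<omega>) \<partial>M) = (\<integral>\<^sup>+w. (\<integral>\<^sup>+x. f x \<partial>kern w) \<partial>distr M S (W []))"
proof -
  have Zm[measurable]: "Z u \<in> M \<rightarrow>\<^sub>M SSp S" by (rule Z_meas[OF u])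
  have "(\<integral>\<^sup>+\<omega>. f (child_seq X u \<omega>) \<partial>M) = (\<integral>\<^sup>+\<omega>. f (snd (Z u \<omega>)) \<partial>M)"
    by (simp add: Z_def)
  also have "\<dots> = (\<integral>\<^sup>+z. f (snd z) \<partial>distr M (SSp S) (Z u))"
    by (subst nn_integral_distr) auto
  also have "\<dots> = (\<integral>\<^sup>+z. f (snd z) \<partial>distr M (SSp S) (Z []))"
    using Z_distr[OF u] by simp
  also have "\<dots> = (\<integral>\<^sup>+w. (\<integral>\<^sup>+z. f (snd z) \<partial>distr (kern w) (SSp S) (\<lambda>x. (w, x))) \<partial>distr M S (W []))"
    unfolding bind_eq
  proof (rule nn_integral_bind)
    show "(\<lambda>z. f (snd z)) \<in> borel_measurable (SSp S)" by (rule measurable_compose[OF measurable_snd f])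
    have km: "kern \<in> distr M S (W []) \<rightarrow>\<^sub>M subprob_algebra (PiM UNIV (\<lambda>_. borel))"
      using measurable_prob_algebraD[OF kern_meas] measurable_cong_sets[OF sets_distr refl] by blast
    have se: "sets (distr M S (W []) \<Otimes>\<^sub>M PiM UNIV (\<lambda>_::nat. (borel::real measure))) = sets (SSp S)"
      by (rule sets_pair_measure_cong) auto
    have pm: "case_prod (\<lambda>w x. (w, x)) \<in> distr M S (W []) \<Otimes>\<^sub>M PiM UNIV (\<lambda>_::nat. (borel::real measure)) \<rightarrow>\<^sub>M SSp S"
      unfolding case_prod_Pair id_def by (rule measurable_ident_sets[OF se])
    show "(\<lambda>w. distr (kern w) (SSp S) (\<lambda>x. (w, x))) \<in> distr M S (W []) \<rightarrow>\<^sub>M subprob_algebra (SSp S)"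
      by (rule measurable_distr2[OF pm km])
  qed
  also have "\<dots> = (\<integral>\<^sup>+w. (\<integral>\<^sup>+x. f x \<partial>kern w) \<partial>distr M S (W []))"
  proof (rule nn_integral_cong)
    fix w assume "w \<in> space (distr M S (W []))"
    then have w: "w \<in> space S" by simp
    have [measurable]: "(\<lambda>x. (w, x)) \<in> kern w \<rightarrow>\<^sub>M SSp S"
      using w by (simp add: measurable_cong_sets[OF kern_sets[OF w] refl])
    show "(\<integral>\<^sup>+z. f (snd z) \<partial>distr (kern w) (SSp S) (\<lambda>x. (w, x))) = (\<integral>\<^sup>+x. f x \<partial>kern w)"
      by (subst nn_integral_distr) auto
  qed
  finally show ?thesis .
qed


lemma psum: "partial_prog X u k \<omega> = (\<Sum>j<k. child_seq X u \<omega> j)"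
  using sum_bounds_lt_plus1[of "\<lambda>j. X (u @ [j]) \<omega>" k] by (simp add: partial_prog_def child_seq_def)

lemma lap:
  assumes u: "u \<in> tree_nodes"
  shows "(\<integral>\<^sup>+\<omega>. ennreal (exp (- l * partial_prog X u k \<omega>)) \<partial>M) = (\<integral>\<^sup>+w. cond_laplace kern l k w \<partial>distr M S (W []))"
  unfolding psum cond_laplace_def
  by (rule law[OF u, of "\<lambda>x. ennreal (exp (- l * (\<Sum>j<k. x j)))"]) measurable

lemma tailmeas[measurable]: "(\<lambda>x. eG l (\<Sum>i. ennreal (x (i + n)))) \<in> borel_measurable (PiM UNIV (\<lambda>_::nat. (borel::real measure)))"
  by measurable

end

locale cmjA = cmj M S kern W X for M :: "'a measure" and S :: "'s measure" and kern :: "'s \<Rightarrow> (nat \<Rightarrow> real) measure"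
    and W :: "nat list \<Rightarrow> 'a \<Rightarrow> 's" and X :: "nat list \<Rightarrow> 'a \<Rightarrow> real" +
  fixes MY :: "'b measure" and Y :: "nat \<Rightarrow> 'b \<Rightarrow> real" and lam :: "nat \<Rightarrow> real"
  assumes AA: "assumption_A M S kern W X MY Y lam"
begin

lemma MYprob: "prob_space MY" using AA by (simp add: assumption_A_def)

lemma Yprops: "n \<ge> 1 \<Longrightarrow> Y n \<in> borel_measurable MY \<and> (\<forall>y\<in>space MY. 0 < Y n y)"
  using AA by (simp add: assumption_A_def)

lemma Ydom: "n \<ge> 1 \<Longrightarrow> w \<in> space S \<Longrightarrow>
   emeasure (kern w) {x\<in>space (kern w). ennreal t < (\<Sum>i. ennreal (x (i + n)))} \<le> emeasure MY {y\<in>space MY. t < Y n y}"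
  using AA by (simp add: assumption_A_def)

lemma lam_pos: "n \<ge> 1 \<Longrightarrow> 0 < lam n" using AA by (simp add: assumption_A_def)

lemma lam_mono: "1 \<le> n \<Longrightarrow> n \<le> m \<Longrightarrow> lam n \<le> lam m"
  using AA unfolding assumption_A_def by (metis order_le_less order_refl)

lemma root_tail:
  assumes n: "n \<ge> 1"
  shows "(\<integral>\<^sup>+\<omega>. eG (lam n) (\<Sum>i. ennreal (child_seq X [] \<omega> (i + n))) \<partial>M) \<le> mgf MY (Y n) (lam n)"
proof -
  have "(\<integral>\<^sup>+\<omega>. eG (lam n) (\<Sum>i. ennreal (child_seq X [] \<omega> (i + n))) \<partial>M)
     = (\<integral>\<^sup>+w. (\<integral>\<^sup>+x. eG (lam n) (\<Sum>i. ennreal (x (i + n))) \<partial>kern w) \<partial>distr M S (W []))"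
    by (rule law[OF nil_tree]) measurable
  also have "\<dots> \<le> (\<integral>\<^sup>+w. mgf MY (Y n) (lam n) \<partial>distr M S (W []))"
  proof (rule nn_integral_mono)
    fix w assume "w \<in> space (distr M S (W []))"
    then have w: "w \<in> space S" by simp
    have ms: "(\<lambda>x. \<Sum>i. ennreal (x (i + n))) \<in> borel_measurable (kern w)"
      unfolding measurable_cong_sets[OF kern_sets[OF w] refl] by measurable
    show "(\<integral>\<^sup>+x. eG (lam n) (\<Sum>i. ennreal (x (i + n))) \<partial>kern w) \<le> mgf MY (Y n) (lam n)"
      unfolding mgf_def
      apply (rule DOM[OF kern_prob[OF w] MYprob ms])
      using Yprops[OF n] lam_pos[OF n] Ydom[OF n w] by (auto intro: less_imp_le)
  qed
  also have "\<dots> = mgf MY (Y n) (lam n)"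
    using prob_space.emeasure_space_1[OF P.prob_space_distr[OF W_meas]] by simp
  finally show ?thesis .
qed

end


definition kk :: "nat list \<Rightarrow> nat \<Rightarrow> nat" where
  "kk a i = (if Suc i = length a then hd a else a ! Suc i)"

lemma tree_take: "a \<in> tree_nodes \<Longrightarrow> take j a \<in> tree_nodes"
  by (auto simp: tree_nodes_def dest: in_set_takeD)

lemma tree_snoc: "u \<in> tree_nodes \<Longrightarrow> 1 \<le> j \<Longrightarrow> u @ [j] \<in> tree_nodes"
  by (auto simp: tree_nodes_def)

context cmjA begin

lemma pp_nonneg: "u \<in> tree_nodes \<Longrightarrow> 0 \<le> partial_prog X u k \<omega>"
  unfolding partial_prog_def by (auto intro!: sum_nonneg X_nonneg tree_snoc)

lemma pw_bound:
  assumes a: "a \<in> tree_nodes" "a \<noteq> []" and l: "0 < l"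
  shows "indicator {\<omega>\<in>space M. children_before X a (hd a) [] \<omega>} \<omega> \<le>
     eG l (\<Sum>i. ennreal (child_seq X [] \<omega> (i + hd a))) *
       (\<Prod>i<length a. ennreal (exp (- l * partial_prog X (take (Suc i) a) (kk a i) \<omega>)))"
proof -
  obtain m' where m: "length a = Suc m'" using a(2) by (cases a) auto
  define p where "p u k = partial_prog X u k \<omega>" for u k
  have nn: "\<And>j k. 0 \<le> p (take j a) k" unfolding p_def by (rule pp_nonneg[OF tree_take[OF a(1)]])
  have nn0: "\<And>k. 0 \<le> p [] k" using nn[of 0] by simp
  have hd: "a ! 0 = hd a" using a(2) by (simp add: hd_conv_nth)
  have b: "birth X a \<omega> = p [] (hd a) + (\<Sum>i<m'. p (take (Suc i) a) (a ! Suc i))"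
    unfolding birth_def p_def partial_prog_def m sum.lessThan_Suc_shift using hd by simp
  define Q where "Q = (\<Sum>i<length a. p (take (Suc i) a) (kk a i))"
  have Qeq: "Q = (\<Sum>i<m'. p (take (Suc i) a) (a ! Suc i)) + p a (hd a)"
  proof -
    have "(\<Sum>i<m'. p (take (Suc i) a) (kk a i)) = (\<Sum>i<m'. p (take (Suc i) a) (a ! Suc i))"
      by (rule sum.cong) (auto simp: kk_def m)
    moreover have "kk a m' = hd a" "take (Suc m') a = a" by (auto simp: kk_def m[symmetric])
    ultimately show ?thesis unfolding Q_def m sum.lessThan_Suc by simp
  qed
  have Qnn: "0 \<le> Q" unfolding Q_def by (intro sum_nonneg nn)
  define T where "T = (\<Sum>i. ennreal (child_seq X [] \<omega> (i + hd a)))"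
  have tot: "total_prog X [] \<omega> = T + ennreal (p [] (hd a))"
  proof -
    have "total_prog X [] \<omega> = (\<Sum>j. ennreal (child_seq X [] \<omega> j))"
      by (simp add: total_prog_def child_seq_def)
    also have "\<dots> = T + (\<Sum>j<hd a. ennreal (child_seq X [] \<omega> j))"
      unfolding T_def by (rule suminf_offset) simp
    also have "(\<Sum>j<hd a. ennreal (child_seq X [] \<omega> j)) = ennreal (p [] (hd a))"
      unfolding p_def psum
      by (rule sum_ennreal) (auto simp: child_seq_def tree_nodes_def intro!: X_nonneg)
    finally show ?thesis .
  qed
  have b0: "birth X [] \<omega> = 0" by (simp add: birth_def)
  have prodeq: "(\<Prod>i<length a. ennreal (exp (- l * partial_prog X (take (Suc i) a) (kk a i) \<omega>)))
      = ennreal (exp (- l * Q))"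
    unfolding Q_def p_def
    by (subst prod_ennreal) (auto simp: exp_sum sum_distrib_left)
  show ?thesis
  proof (cases "\<omega> \<in> {\<omega>\<in>space M. children_before X a (hd a) [] \<omega>}")
    case False then show ?thesis by simp
  next
    case True
    then have "ennreal (birth X a \<omega> + p a (hd a)) < ennreal 0 + total_prog X [] \<omega>"
      by (simp add: children_before_def b0 p_def)
    then have "ennreal (p [] (hd a)) + ennreal Q < ennreal (p [] (hd a)) + T"
      using nn0 Qnn nn[of "length a"] unfolding tot b Qeq
      by (simp add: ennreal_plus[symmetric] ac_simps del: ennreal_plus)
    then have QT: "ennreal Q < T" by (simp add: ennreal_add_left_cancel_less)
    show ?thesis
    proof (cases T)
      case (real t)
      then have t: "0 \<le> t" "T = ennreal t" by auto
      with QT have "Q < t" using ennreal_less_iff[OF Qnn, of t] by simp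
      then have "1 \<le> exp (l * t) * exp (- l * Q)"
        using l by (simp add: exp_add[symmetric] algebra_simps)
      then show ?thesis using True t
        unfolding prodeq T_def[symmetric] by (simp add: eG_def ennreal_mult[symmetric] del: ennreal_mult)
    next
      case top
      then show ?thesis using True unfolding prodeq T_def[symmetric]
        by (simp add: eG_def ennreal_mult_top mult.commute)
    qed
  qed
qed

end


context cmjA begin

lemma chernoff:
  assumes a: "a \<in> tree_nodes" "a \<noteq> []"
  shows "emeasure M {\<omega>\<in>space M. children_before X a (hd a) [] \<omega>} \<le>
      mgf MY (Y (hd a)) (lam (hd a)) *
      (\<Prod>i<length a. \<integral>\<^sup>+ w. cond_laplace kern (lam (hd a)) (kk a i) w \<partial>distr M S (W []))"
proof -
  define a1 where "a1 = hd a"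
  have a1: "1 \<le> a1" using a unfolding a1_def tree_nodes_def by (cases a) auto
  define l where "l = lam a1"
  have l: "0 < l" unfolding l_def by (rule lam_pos[OF a1])
  define phi where "phi u z = (if u = [] then eG l (\<Sum>i. ennreal (snd z (i + a1)))
      else ennreal (exp (- l * (\<Sum>j < kk a (length u - 1). snd z j))))" for u :: "nat list" and z :: "'s \<times> (nat \<Rightarrow> real)"
  define J where "J = (\<lambda>i. take (Suc i) a) ` {..<length a}"
  define I where "I = insert [] J"
  have nJ: "[] \<notin> J"
  proof
    assume "[] \<in> J"
    then obtain i where "[] = take (Suc i) a" unfolding J_def by (rule imageE)
    with a(2) show False by simp
  qed
  have injJ: "inj_on (\<lambda>i. take (Suc i) a) {..<length a}"
  proof (rule inj_onI)
    fix i j assume "i \<in> {..<length a}" "j \<in> {..<length a}" "take (Suc i) a = take (Suc j) a"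
    then have "length (take (Suc i) a) = length (take (Suc j) a)" by simp
    with \<open>i \<in> {..<length a}\<close> \<open>j \<in> {..<length a}\<close> show "i = j" by simp
  qed
  have Isub: "I \<subseteq> tree_nodes" unfolding I_def J_def using nil_tree tree_take[OF a(1)] by auto
  have finI: "finite I" unfolding I_def J_def by simp
  have phim: "phi u \<in> borel_measurable (SSp S)" for u
  proof (cases "u = []")
    case True
    have "(\<lambda>z::'s \<times> (nat \<Rightarrow> real). eG l (\<Sum>i. ennreal (snd z (i + a1)))) \<in> borel_measurable (SSp S)"
      by measurable
    then show ?thesis using True by (simp add: phi_def[abs_def])
  next
    case False
    have "(\<lambda>z::'s \<times> (nat \<Rightarrow> real). ennreal (exp (- l * (\<Sum>j < kk a (length u - 1). snd z j)))) \<in> borel_measurable (SSp S)"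
      by measurable
    then show ?thesis using False by (simp add: phi_def[abs_def])
  qed
  have ind: "P.indep_vars (\<lambda>_. borel) (\<lambda>u \<omega>. phi u (Z u \<omega>)) I"
    by (rule P.indep_vars_subset[OF P.indep_vars_compose2[OF indep phim] Isub])
  have phirv: "(\<lambda>\<omega>. phi u (Z u \<omega>)) \<in> borel_measurable M" if "u \<in> tree_nodes" for u
    using measurable_compose[OF Z_meas[OF that] phim] by simp
  have prod_eq: "(\<Prod>u\<in>I. phi u (Z u \<omega>)) =
     eG l (\<Sum>i. ennreal (child_seq X [] \<omega> (i + hd a))) *
       (\<Prod>i<length a. ennreal (exp (- l * partial_prog X (take (Suc i) a) (kk a i) \<omega>)))" for \<omega>
  proof -
    have "(\<Prod>u\<in>I. phi u (Z u \<omega>)) = phi [] (Z [] \<omega>) * (\<Prod>u\<in>J. phi u (Z u \<omega>))"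
      unfolding I_def using nJ finI I_def by simp
    also have "(\<Prod>u\<in>J. phi u (Z u \<omega>)) = (\<Prod>i<length a. phi (take (Suc i) a) (Z (take (Suc i) a) \<omega>))"
      unfolding J_def by (rule prod.reindex[OF injJ, unfolded comp_def])
    also have "\<dots> = (\<Prod>i<length a. ennreal (exp (- l * partial_prog X (take (Suc i) a) (kk a i) \<omega>)))"
    proof (rule prod.cong[OF refl])
      fix i assume "i \<in> {..<length a}"
      then have "take (Suc i) a \<noteq> []" "length (take (Suc i) a) - 1 = i" using a(2) by auto
      then show "phi (take (Suc i) a) (Z (take (Suc i) a) \<omega>) = ennreal (exp (- l * partial_prog X (take (Suc i) a) (kk a i) \<omega>))"
        by (simp add: phi_def Z_def psum)
    qed
    finally show ?thesis by (simp add: phi_def Z_def a1_def)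
  qed
  define E where "E = {\<omega>\<in>space M. children_before X a (hd a) [] \<omega>}"
  have "emeasure M E \<le> (\<integral>\<^sup>+\<omega>. (\<Prod>u\<in>I. phi u (Z u \<omega>)) \<partial>M)"
  proof (cases "E \<in> sets M")
    case True
    have "emeasure M E = (\<integral>\<^sup>+\<omega>. indicator E \<omega> \<partial>M)" using True by simp
    also have "\<dots> \<le> (\<integral>\<^sup>+\<omega>. (\<Prod>u\<in>I. phi u (Z u \<omega>)) \<partial>M)"
      unfolding prod_eq E_def l_def a1_def by (rule nn_integral_mono pw_bound[OF a lam_pos])+ (use a1 a1_def in simp)
    finally show ?thesis .
  next
    case False then show ?thesis by (simp add: emeasure_notin_sets)
  qed
  also have "\<dots> = (\<Prod>u\<in>I. \<integral>\<^sup>+\<omega>. phi u (Z u \<omega>) \<partial>M)"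
    by (rule P.indep_vars_nn_integral[OF finI ind]) simp
  also have "\<dots> = (\<integral>\<^sup>+\<omega>. phi [] (Z [] \<omega>) \<partial>M) * (\<Prod>i<length a. \<integral>\<^sup>+\<omega>. phi (take (Suc i) a) (Z (take (Suc i) a) \<omega>) \<partial>M)"
  proof -
    have "(\<Prod>u\<in>J. \<integral>\<^sup>+\<omega>. phi u (Z u \<omega>) \<partial>M) = (\<Prod>i<length a. \<integral>\<^sup>+\<omega>. phi (take (Suc i) a) (Z (take (Suc i) a) \<omega>) \<partial>M)"
      unfolding J_def by (rule prod.reindex[OF injJ, unfolded comp_def])
    moreover have "finite J" unfolding J_def by simp
    ultimately show ?thesis unfolding I_def using nJ by simp
  qed
  also have "\<dots> \<le> mgf MY (Y (hd a)) (lam (hd a)) *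
      (\<Prod>i<length a. \<integral>\<^sup>+ w. cond_laplace kern (lam (hd a)) (kk a i) w \<partial>distr M S (W []))"
  proof (rule mult_mono)
    show "(\<integral>\<^sup>+\<omega>. phi [] (Z [] \<omega>) \<partial>M) \<le> mgf MY (Y (hd a)) (lam (hd a))"
      using root_tail[OF a1] by (simp add: phi_def Z_def l_def a1_def)
    show "(\<Prod>i<length a. \<integral>\<^sup>+\<omega>. phi (take (Suc i) a) (Z (take (Suc i) a) \<omega>) \<partial>M)
      \<le> (\<Prod>i<length a. \<integral>\<^sup>+ w. cond_laplace kern (lam (hd a)) (kk a i) w \<partial>distr M S (W []))"
    proof (rule eq_refl, rule prod.cong[OF refl])
      fix i assume "i \<in> {..<length a}"
      then have ne: "take (Suc i) a \<noteq> []" "length (take (Suc i) a) - 1 = i" using a(2) by auto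
      have "(\<integral>\<^sup>+\<omega>. phi (take (Suc i) a) (Z (take (Suc i) a) \<omega>) \<partial>M)
          = (\<integral>\<^sup>+\<omega>. ennreal (exp (- l * partial_prog X (take (Suc i) a) (kk a i) \<omega>)) \<partial>M)"
        using ne by (simp add: phi_def Z_def psum)
      also have "\<dots> = (\<integral>\<^sup>+ w. cond_laplace kern (lam (hd a)) (kk a i) w \<partial>distr M S (W []))"
        unfolding l_def a1_def by (rule lap[OF tree_take[OF a(1)]])
      finally show "(\<integral>\<^sup>+\<omega>. phi (take (Suc i) a) (Z (take (Suc i) a) \<omega>) \<partial>M)
          = (\<integral>\<^sup>+ w. cond_laplace kern (lam (hd a)) (kk a i) w \<partial>distr M S (W []))" .
    qed
  qed simp_all
  finally show ?thesis unfolding E_def .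
qed

end


context cmjA begin

lemma X_meas: "u \<in> tree_nodes \<Longrightarrow> X u \<in> borel_measurable M"
  using std by (simp add: cmj_standing_def)

lemma pp0_meas[measurable]: "(\<lambda>\<omega>. partial_prog X [] k \<omega>) \<in> borel_measurable M"
  unfolding partial_prog_def
  by (rule borel_measurable_sum) (auto intro!: X_meas simp: tree_nodes_def)

definition "cc n k = (\<integral>\<^sup>+ w. cond_laplace kern (lam n) k w \<partial>distr M S (W []))"

lemma cc_alt: "cc n k = (\<integral>\<^sup>+ \<omega>. ennreal (exp (- lam n * partial_prog X [] k \<omega>)) \<partial>M)"
  unfolding cc_def by (rule lap[OF nil_tree, symmetric])

lemma pp0_nonneg: "0 \<le> partial_prog X [] k \<omega>" by (rule pp_nonneg[OF nil_tree])

lemma cc_mono: assumes "1 \<le> n'" "n' \<le> n" shows "cc n k \<le> cc n' k"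
  unfolding cc_alt
proof (rule nn_integral_mono)
  fix \<omega>
  have "lam n' \<le> lam n" by (rule lam_mono[OF assms])
  then have "- lam n * partial_prog X [] k \<omega> \<le> - lam n' * partial_prog X [] k \<omega>"
    using pp0_nonneg[of k \<omega>] by (intro mult_right_mono) auto
  then show "ennreal (exp (- lam n * partial_prog X [] k \<omega>)) \<le> ennreal (exp (- lam n' * partial_prog X [] k \<omega>))"
    by (intro ennreal_leI) simp
qed

lemma cc_le1: assumes "1 \<le> n" shows "cc n k \<le> 1"
proof -
  have "cc n k \<le> (\<integral>\<^sup>+ \<omega>. 1 \<partial>M)" unfolding cc_alt
  proof (rule nn_integral_mono)
    fix \<omega>
    have "0 \<le> lam n * partial_prog X [] k \<omega>" using lam_pos[OF assms] pp0_nonneg[of k \<omega>] by simp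
    then show "ennreal (exp (- lam n * partial_prog X [] k \<omega>)) \<le> 1" by simp
  qed
  then show ?thesis by (simp add: P.emeasure_space_1)
qed

lemma mgf_ge1: assumes "1 \<le> n" shows "1 \<le> mgf MY (Y n) (lam n)"
proof -
  interpret Q: prob_space MY by (rule MYprob)
  have "(\<integral>\<^sup>+ y. 1 \<partial>MY) \<le> mgf MY (Y n) (lam n)" unfolding mgf_def
  proof (rule nn_integral_mono)
    fix y assume "y \<in> space MY"
    then have "0 \<le> lam n * Y n y" using Yprops[OF assms] lam_pos[OF assms] by (simp add: less_imp_le)
    then show "1 \<le> ennreal (exp (lam n * Y n y))" by simp
  qed
  then show ?thesis by (simp add: Q.emeasure_space_1)
qed

lemma cc_summable: "(\<Sum>n. cc (Suc n) (Suc n)) < \<infinity>"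
proof -
  have "(\<Sum>n. cc (Suc n) (Suc n)) \<le> (\<Sum>n. mgf MY (Y (Suc n)) (lam (Suc n)) * cc (Suc n) (Suc n))"
  proof (rule suminf_le)
    fix n
    show "cc (Suc n) (Suc n) \<le> mgf MY (Y (Suc n)) (lam (Suc n)) * cc (Suc n) (Suc n)"
      using mult_right_mono[OF mgf_ge1[of "Suc n"], of "cc (Suc n) (Suc n)"] by simp
  qed auto
  also have "\<dots> < \<infinity>" using AA by (simp add: assumption_A_def cc_def)
  finally show ?thesis .
qed

lemma INF_ind: "(INF i. ennreal (exp (- (lam (Suc i) * p)))) = (if p = 0 then 1 else 0)" if p: "0 \<le> p" for p
proof (cases "p = 0")
  case True then show ?thesis by simp
next
  case False
  with p have pp: "0 < p" by simp
  have "(INF i. ennreal (exp (- (lam (Suc i) * p)))) \<le> 0"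
  proof (rule ennreal_le_epsilon)
    fix e :: real assume e: "0 < e"
    have lim: "filterlim lam at_top sequentially" using AA by (simp add: assumption_A_def)
    then have "eventually (\<lambda>n. - ln e / p \<le> lam n) sequentially"
      by (simp add: filterlim_at_top)
    then obtain N where N: "\<And>n. n \<ge> N \<Longrightarrow> - ln e / p \<le> lam n" by (auto simp: eventually_sequentially)
    have "(- ln e / p) * p \<le> lam (Suc N) * p" using N[of "Suc N"] pp by (intro mult_right_mono) auto
    then have "- ln e \<le> lam (Suc N) * p" using pp by simp
    then have "- (lam (Suc N) * p) \<le> ln e" by linarith
    then have "exp (- (lam (Suc N) * p)) \<le> exp (ln e)" by simp
    then have "exp (- (lam (Suc N) * p)) \<le> e" using e by simp
    then have "(INF i. ennreal (exp (- (lam (Suc i) * p)))) \<le> ennreal e"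
      by (intro INF_lower2[of "N"] ennreal_leI) auto
    then show "(INF i. ennreal (exp (- (lam (Suc i) * p)))) \<le> 0 + ennreal e" by simp
  qed
  then show ?thesis using False by simp
qed

definition "zz k = emeasure M {\<omega>\<in>space M. partial_prog X [] k \<omega> = 0}"

lemma cc_lim:
  assumes e: "0 < e"
  shows "\<exists>N. \<forall>n\<ge>N. cc n k \<le> zz k + ennreal e"
proof -
  define f where "f i \<omega> = ennreal (exp (- lam (Suc i) * partial_prog X [] k \<omega>))" for i \<omega>
  have dec: "decseq f"
  proof (intro decseq_SucI le_funI)
    fix i :: nat and \<omega>
    have "lam (Suc i) \<le> lam (Suc (Suc i))" using lam_mono[of "Suc i" "Suc (Suc i)"] by simp
    then have "- lam (Suc (Suc i)) * partial_prog X [] k \<omega> \<le> - lam (Suc i) * partial_prog X [] k \<omega>"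
      using pp0_nonneg[of k \<omega>] by (intro mult_right_mono) auto
    then show "f (Suc i) \<omega> \<le> f i \<omega>"
      unfolding f_def by (intro ennreal_leI) simp
  qed
  have fm: "f i \<in> borel_measurable M" for i unfolding f_def by measurable
  have ffin: "(\<integral>\<^sup>+ x. f i x \<partial>M) < \<infinity>" for i
    using cc_le1[of "Suc i" k] unfolding f_def cc_alt[symmetric] by (simp add: le_less_trans)
  have "(\<integral>\<^sup>+ x. (INF i. f i x) \<partial>M) = (INF i. integral\<^sup>N M (f i))"
    by (rule nn_integral_monotone_convergence_INF_decseq[OF dec fm ffin])
  moreover have "(\<integral>\<^sup>+ x. (INF i. f i x) \<partial>M) = zz k"
  proof -
    have "(\<integral>\<^sup>+ x. (INF i. f i x) \<partial>M) = (\<integral>\<^sup>+ x. indicator {\<omega>\<in>space M. partial_prog X [] k \<omega> = 0} x \<partial>M)"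
      by (intro nn_integral_cong) (simp add: f_def INF_ind[OF pp0_nonneg] indicator_def)
    also have "\<dots> = zz k" unfolding zz_def by (intro nn_integral_indicator) measurable
    finally show ?thesis .
  qed
  ultimately have inf: "(INF i. cc (Suc i) k) = zz k" unfolding f_def cc_alt by simp
  have "zz k \<le> 1" unfolding zz_def by (rule P.emeasure_le_1)
  then have fin: "zz k \<noteq> \<infinity>" by (auto simp: top_unique)
  have "zz k + 0 < zz k + ennreal e" using fin e by (subst ennreal_add_left_cancel_less) simp
  then have "(INF i. cc (Suc i) k) < zz k + ennreal e" unfolding inf by simp
  then obtain i where i: "cc (Suc i) k < zz k + ennreal e" by (auto simp: INF_less_iff)
  show ?thesis
  proof (intro exI allI impI)
    fix n assume "Suc i \<le> n"
    then have "cc n k \<le> cc (Suc i) k" by (intro cc_mono) auto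
    with i show "cc n k \<le> zz k + ennreal e" by simp
  qed
qed

end


context cmjA begin

definition "E0 = (\<integral>\<^sup>+ \<omega>. Sup {ennreal (real k) | k. 1 \<le> k \<and> X [k] \<omega> = 0} \<partial>M)"

lemma E0_less: "E0 < 1" using AA by (simp add: assumption_A_def E0_def)

lemma zz_sum: "(\<Sum>k\<in>{1..k0}. zz k) \<le> E0"
proof -
  have meas: "{\<omega>\<in>space M. partial_prog X [] k \<omega> = 0} \<in> sets M" for k by measurable
  have "(\<Sum>k\<in>{1..k0}. zz k) = (\<integral>\<^sup>+ \<omega>. (\<Sum>k\<in>{1..k0}. indicator {\<omega>\<in>space M. partial_prog X [] k \<omega> = 0} \<omega>) \<partial>M)"
    unfolding zz_def by (subst nn_integral_sum) (auto simp: meas)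
  also have "\<dots> \<le> E0" unfolding E0_def
  proof (rule nn_integral_mono)
    fix \<omega> assume \<omega>: "\<omega> \<in> space M"
    define A where "A = {k\<in>{1..k0}. partial_prog X [] k \<omega> = 0}"
    have finA: "finite A" unfolding A_def by simp
    have "(\<Sum>k\<in>{1..k0}. indicator {\<omega>\<in>space M. partial_prog X [] k \<omega> = 0} \<omega> :: ennreal)
        = (\<Sum>k\<in>{1..k0}. if partial_prog X [] k \<omega> = 0 then 1 else 0)"
      using \<omega> by (intro sum.cong) (auto simp: indicator_def)
    also have "\<dots> = (\<Sum>k\<in>A. 1)"
      unfolding A_def by (rule sum.inter_filter[symmetric]) simp
    also have "\<dots> = of_nat (card A)" by simp
    also have "\<dots> \<le> Sup {ennreal (real k) | k. 1 \<le> k \<and> X [k] \<omega> = 0}"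
    proof (cases "A = {}")
      case True then show ?thesis by simp
    next
      case False
      define r where "r = Max A"
      have rA: "r \<in> A" unfolding r_def using finA False by simp
      have "A \<subseteq> {1..r}" unfolding r_def using finA by (auto simp: A_def)
      then have "card A \<le> r" using card_mono[of "{1..r}" A] by simp
      have r1: "1 \<le> r" and pr: "partial_prog X [] r \<omega> = 0" using rA by (auto simp: A_def)
      have "(\<Sum>j=1..r. X [j] \<omega>) = 0" using pr by (simp add: partial_prog_def)
      then have "\<forall>j\<in>{1..r}. X [j] \<omega> = 0"
        by (subst sum_nonneg_eq_0_iff[symmetric]) (auto intro!: X_nonneg simp: tree_nodes_def)
      then have "X [r] \<omega> = 0" using r1 by simp
      then have "ennreal (real r) \<le> Sup {ennreal (real k) | k. 1 \<le> k \<and> X [k] \<omega> = 0}"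
        using r1 by (intro Sup_upper) blast
      moreover have "(of_nat (card A) :: ennreal) \<le> ennreal (real r)"
        using \<open>card A \<le> r\<close> by (simp add: ennreal_of_nat_eq_real_of_nat)
      ultimately show ?thesis by (rule order_trans[rotated])
    qed
    finally show "(\<Sum>k\<in>{1..k0}. indicator {\<omega>\<in>space M. partial_prog X [] k \<omega> = 0} \<omega>) \<le> Sup {ennreal (real k) | k. 1 \<le> k \<and> X [k] \<omega> = 0}" .
  qed
  finally show ?thesis .
qed

end


context cmjA begin

lemma asym: "\<exists>\<zeta>::real. 0 \<le> \<zeta> \<and> \<zeta> < 1 \<and> (\<exists>K::nat. \<forall>n>K. (\<Sum>k\<in>{1..n}. cc n k) \<le> ennreal \<zeta>)"
proof -
  have "E0 \<noteq> \<infinity>" using E0_less by (auto simp: top_unique)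
  then obtain e where e: "0 \<le> e" "E0 = ennreal e" by (cases E0 rule: ennreal_cases) auto
  have e1: "e < 1" using E0_less unfolding e(2) by simp
  define dd where "dd = (1 - e) / 3"
  have dd: "0 < dd" using e1 by (simp add: dd_def)
  define s where "s i = enn2real (cc (Suc i) (Suc i))" for i
  have cs: "cc (Suc i) (Suc i) = ennreal (s i)" for i
  proof -
    have "cc (Suc i) (Suc i) \<le> 1" by (rule cc_le1) simp
    then have "cc (Suc i) (Suc i) < top" using ennreal_one_less_top by (rule le_less_trans)
    then show ?thesis unfolding s_def by (rule ennreal_enn2real[symmetric])
  qed
  have s0: "0 \<le> s i" for i by (simp add: s_def)
  have sm: "summable s"
    by (rule summable_suminf_not_top[OF s0]) (use cc_summable in \<open>simp add: cs[symmetric]\<close>)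
  obtain k0 where k0: "\<And>n. n \<ge> k0 \<Longrightarrow> norm (\<Sum>i. s (i + n)) < dd"
    using suminf_exist_split[OF dd sm] by blast
  have tail: "(\<Sum>i. s (i + k0)) < dd" using k0[of k0] suminf_nonneg[OF summable_ignore_initial_segment[OF sm, of k0]] s0
    by simp
  define d where "d = dd / (real k0 + 1)"
  have d: "0 < d" using dd by (simp add: d_def)
  have "\<forall>k\<in>{1..k0}. \<exists>N. \<forall>n\<ge>N. cc n k \<le> zz k + ennreal d" using cc_lim[OF d] by blast
  from bchoice[OF this] obtain NN where NN0: "\<forall>k\<in>{1..k0}. \<forall>n\<ge>NN k. cc n k \<le> zz k + ennreal d"
    by (elim exE)
  have NN: "\<And>k n. k \<in> {1..k0} \<Longrightarrow> n \<ge> NN k \<Longrightarrow> cc n k \<le> zz k + ennreal d"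
    using NN0 by blast
  define K where "K = k0 + (\<Sum>k\<in>{1..k0}. NN k)"
  show ?thesis
  proof (intro exI conjI allI impI)
    show "0 \<le> e + 2 * dd" using e dd by simp
    show "e + 2 * dd < 1" using e1 unfolding dd_def by (simp add: field_simps)
    fix n assume nK: "K < n"
    then have nk0: "k0 \<le> n" by (simp add: K_def)
    have split: "{1..n} = {1..k0} \<union> {Suc k0..n}" using nk0 by auto
    have "(\<Sum>k\<in>{1..n}. cc n k) = (\<Sum>k\<in>{1..k0}. cc n k) + (\<Sum>k\<in>{Suc k0..n}. cc n k)"
      unfolding split by (rule sum.union_disjoint) auto
    also have "(\<Sum>k\<in>{1..k0}. cc n k) \<le> (\<Sum>k\<in>{1..k0}. zz k + ennreal d)"
    proof (rule sum_mono)
      fix k assume k: "k \<in> {1..k0}"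
      have "NN k \<le> (\<Sum>k\<in>{1..k0}. NN k)" by (rule member_le_sum) (use k in auto)
      then have "NN k \<le> n" using nK by (simp add: K_def)
      then show "cc n k \<le> zz k + ennreal d" by (rule NN[OF k])
    qed
    also have "(\<Sum>k\<in>{1..k0}. zz k + ennreal d) = (\<Sum>k\<in>{1..k0}. zz k) + ennreal (real k0 * d)"
      using d by (simp add: sum.distrib ennreal_mult ennreal_of_nat_eq_real_of_nat)
    also have "\<dots> \<le> ennreal e + ennreal dd"
    proof (rule add_mono)
      show "(\<Sum>k\<in>{1..k0}. zz k) \<le> ennreal e" using zz_sum e by simp
      have "real k0 * d \<le> dd" using dd by (simp add: d_def field_simps)
      then show "ennreal (real k0 * d) \<le> ennreal dd" by (rule ennreal_leI)
    qed
    also have "(\<Sum>k\<in>{Suc k0..n}. cc n k) \<le> (\<Sum>k\<in>{Suc k0..n}. cc k k)"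
      by (rule sum_mono, rule cc_mono) auto
    also have "(\<Sum>k\<in>{Suc k0..n}. cc k k) = (\<Sum>i<n - k0. cc (Suc (i + k0)) (Suc (i + k0)))"
    proof -
      have img: "{Suc k0..n} = (\<lambda>i. Suc (i + k0)) ` {..<n - k0}"
      proof
        show "{Suc k0..n} \<subseteq> (\<lambda>i. Suc (i + k0)) ` {..<n - k0}"
        proof
          fix k assume "k \<in> {Suc k0..n}"
          then show "k \<in> (\<lambda>i. Suc (i + k0)) ` {..<n - k0}"
            by (intro image_eqI[of _ _ "k - Suc k0"]) auto
        qed
      qed auto
      show ?thesis unfolding img by (subst sum.reindex) (auto simp: inj_on_def)
    qed
    also have "\<dots> = ennreal (\<Sum>i<n - k0. s (i + k0))" using s0 by (simp add: cs)
    also have "\<dots> \<le> ennreal dd"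
    proof (rule ennreal_leI)
      have "(\<Sum>i<n - k0. s (i + k0)) \<le> (\<Sum>i. s (i + k0))"
        by (rule sum_le_suminf) (auto intro: s0 simp: sm)
      with tail show "(\<Sum>i<n - k0. s (i + k0)) \<le> dd" by simp
    qed
    finally have "(\<Sum>k\<in>{1..n}. cc n k) \<le> ennreal e + ennreal dd + ennreal dd"
      by (simp add: add_mono)
    also have "\<dots> = ennreal (e + 2 * dd)" using e dd by (simp add: ennreal_plus[symmetric] del: ennreal_plus)
    finally show "(\<Sum>k\<in>{1..n}. cc n k) \<le> ennreal (e + 2 * dd)" .
  qed
qed

end


lemma sum_lists_prod:
  fixes c :: "nat \<Rightarrow> ennreal"
  assumes B: "finite B"
  shows "(\<Sum>l\<in>{l. set l \<subseteq> B \<and> length l = n}. \<Prod>i<n. c (l ! i)) = (\<Sum>x\<in>B. c x) ^ n"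
proof (induction n)
  case 0
  have "{l. set l \<subseteq> B \<and> length l = 0} = {[]}" by auto
  then show ?case by simp
next
  case (Suc n)
  define L where "L = {l. set l \<subseteq> B \<and> length l = n}"
  have finL: "finite L" unfolding L_def using finite_lists_length_eq[OF B] by simp
  have img: "{l. set l \<subseteq> B \<and> length l = Suc n} = (\<lambda>(x, l). x # l) ` (B \<times> L)"
  proof
    show "{l. set l \<subseteq> B \<and> length l = Suc n} \<subseteq> (\<lambda>(x, l). x # l) ` (B \<times> L)"
    proof
      fix l assume "l \<in> {l. set l \<subseteq> B \<and> length l = Suc n}"
      then obtain x l' where "l = x # l'" "x \<in> B" "l' \<in> L" unfolding L_def by (cases l) auto
      then show "l \<in> (\<lambda>(x, l). x # l) ` (B \<times> L)" by force
    qed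
  qed (auto simp: L_def)
  have inj: "inj_on (\<lambda>(x, l). x # l) (B \<times> L)" by (auto simp: inj_on_def)
  have "(\<Sum>l\<in>{l. set l \<subseteq> B \<and> length l = Suc n}. \<Prod>i<Suc n. c (l ! i))
      = (\<Sum>p\<in>B \<times> L. \<Prod>i<Suc n. c ((fst p # snd p) ! i))"
    unfolding img by (subst sum.reindex[OF inj]) (auto intro!: sum.cong simp: case_prod_beta)
  also have "\<dots> = (\<Sum>p\<in>B \<times> L. c (fst p) * (\<Prod>i<n. c (snd p ! i)))"
    by (intro sum.cong refl) (simp only: prod.lessThan_Suc_shift nth_Cons_0 nth_Cons_Suc)
  also have "\<dots> = (\<Sum>x\<in>B. \<Sum>l\<in>L. c x * (\<Prod>i<n. c (l ! i)))"
    by (subst sum.cartesian_product) (simp add: case_prod_beta)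
  also have "\<dots> = (\<Sum>x\<in>B. c x) * (\<Sum>l\<in>L. \<Prod>i<n. c (l ! i))"
    by (simp only: sum_distrib_left sum_distrib_right) (rule sum.swap)
  also have "\<dots> = (\<Sum>x\<in>B. c x) ^ Suc n" using Suc.IH unfolding L_def by simp
  finally show ?case .
qed

lemma Aset_eq:
  assumes a1: "1 \<le> a1" and m: "m = Suc m'"
  shows "{a. a \<in> tree_nodes \<and> length a = m \<and> hd a = a1 \<and> conservative a}
       = (\<lambda>l. a1 # l) ` {l. set l \<subseteq> {1..a1} \<and> length l = m'}"
proof
  show "{a. a \<in> tree_nodes \<and> length a = m \<and> hd a = a1 \<and> conservative a}
       \<subseteq> (\<lambda>l. a1 # l) ` {l. set l \<subseteq> {1..a1} \<and> length l = m'}"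
  proof
    fix a assume "a \<in> {a. a \<in> tree_nodes \<and> length a = m \<and> hd a = a1 \<and> conservative a}"
    then have A: "a \<in> tree_nodes" "length a = m" "hd a = a1" "conservative a" by auto
    then obtain l where l: "a = a1 # l" using m by (cases a) auto
    have "set l \<subseteq> {1..a1}" using A l by (auto simp: tree_nodes_def conservative_def)
    moreover have "length l = m'" using A(2) l m by simp
    ultimately show "a \<in> (\<lambda>l. a1 # l) ` {l. set l \<subseteq> {1..a1} \<and> length l = m'}" using l by blast
  qed
next
  show "(\<lambda>l. a1 # l) ` {l. set l \<subseteq> {1..a1} \<and> length l = m'}
      \<subseteq> {a. a \<in> tree_nodes \<and> length a = m \<and> hd a = a1 \<and> conservative a}"
    using a1 m by (auto simp: tree_nodes_def conservative_def)
qed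

context cmjA begin

lemma final:
  "\<exists>\<zeta>::real. \<zeta> < 1 \<and> (\<exists>K::real. K > 0 \<and>
           (\<forall>(a1::nat) (m::nat). real a1 > K \<longrightarrow> m \<ge> 1 \<longrightarrow>
              (\<Sum>a\<in>{a. a \<in> tree_nodes \<and> length a = m \<and> hd a = a1 \<and> conservative a}.
                  emeasure M {\<omega>\<in>space M. children_before X a a1 [] \<omega>})
              \<le> ennreal (\<zeta> ^ (m - 1)) * mgf MY (Y a1) (lam a1) *
                 (\<integral>\<^sup>+ w. cond_laplace kern (lam a1) a1 w \<partial>(distr M S (W [])))))"
proof -
  obtain \<zeta> K0 where z: "0 \<le> \<zeta>" "\<zeta> < 1" and K0: "\<And>n. n > K0 \<Longrightarrow> (\<Sum>k\<in>{1..n}. cc n k) \<le> ennreal \<zeta>"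
    using asym by blast
  show ?thesis
  proof (intro exI conjI allI impI)
    show "\<zeta> < 1" by (rule z(2))
    show "(0::real) < real K0 + 1" by simp
    fix a1 m :: nat assume a1K: "real K0 + 1 < real a1" and m1: "1 \<le> m"
    have a1: "1 \<le> a1" "K0 < a1" using a1K by auto
    obtain m' where m: "m = Suc m'" using m1 by (cases m) auto
    define L where "L = {l. set l \<subseteq> {1..a1} \<and> length l = m'}"
    have finL: "finite L" unfolding L_def using finite_lists_length_eq[of "{1..a1}" m'] by simp
    have A: "{a. a \<in> tree_nodes \<and> length a = m \<and> hd a = a1 \<and> conservative a} = (\<lambda>l. a1 # l) ` L"
      unfolding L_def by (rule Aset_eq[OF a1(1) m])
    have inj: "inj_on (\<lambda>l. a1 # l) L" by (auto simp: inj_on_def)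
    define G where "G = mgf MY (Y a1) (lam a1)"
    have "(\<Sum>a\<in>{a. a \<in> tree_nodes \<and> length a = m \<and> hd a = a1 \<and> conservative a}.
                  emeasure M {\<omega>\<in>space M. children_before X a a1 [] \<omega>})
        = (\<Sum>l\<in>L. emeasure M {\<omega>\<in>space M. children_before X (a1 # l) a1 [] \<omega>})"
      unfolding A by (subst sum.reindex[OF inj]) simp
    also have "\<dots> \<le> (\<Sum>l\<in>L. G * (cc a1 a1 * (\<Prod>i<m'. cc a1 (l ! i))))"
    proof (rule sum_mono)
      fix l assume l: "l \<in> L"
      have tn: "a1 # l \<in> tree_nodes" using l a1 by (auto simp: L_def tree_nodes_def)
      have lenl: "length l = m'" using l by (simp add: L_def)
      have "emeasure M {\<omega>\<in>space M. children_before X (a1 # l) a1 [] \<omega>}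
          \<le> G * (\<Prod>i<length (a1 # l). cc a1 (kk (a1 # l) i))"
        using chernoff[OF tn] by (simp add: G_def cc_def)
      also have "(\<Prod>i<length (a1 # l). cc a1 (kk (a1 # l) i)) = cc a1 a1 * (\<Prod>i<m'. cc a1 (l ! i))"
      proof -
        have "(\<Prod>i<m'. cc a1 (kk (a1 # l) i)) = (\<Prod>i<m'. cc a1 (l ! i))"
          by (rule prod.cong) (auto simp: kk_def lenl)
        moreover have "kk (a1 # l) m' = a1" by (simp add: kk_def lenl)
        ultimately show ?thesis using lenl by (simp add: mult.commute)
      qed
      finally show "emeasure M {\<omega>\<in>space M. children_before X (a1 # l) a1 [] \<omega>}
          \<le> G * (cc a1 a1 * (\<Prod>i<m'. cc a1 (l ! i)))" .
    qed
    also have "\<dots> = G * cc a1 a1 * (\<Sum>l\<in>L. \<Prod>i<m'. cc a1 (l ! i))"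
      by (simp add: sum_distrib_left mult.assoc)
    also have "(\<Sum>l\<in>L. \<Prod>i<m'. cc a1 (l ! i)) = (\<Sum>k\<in>{1..a1}. cc a1 k) ^ m'"
      unfolding L_def by (rule sum_lists_prod) simp
    also have "\<dots> \<le> ennreal \<zeta> ^ m'"
      by (rule power_mono[OF K0[OF a1(2)]]) simp
    also have "G * cc a1 a1 * ennreal \<zeta> ^ m' = ennreal (\<zeta> ^ (m - 1)) * G * cc a1 a1"
      using z m by (simp add: ennreal_power ac_simps)
    finally show "(\<Sum>a\<in>{a. a \<in> tree_nodes \<and> length a = m \<and> hd a = a1 \<and> conservative a}.
                  emeasure M {\<omega>\<in>space M. children_before X a a1 [] \<omega>})
              \<le> ennreal (\<zeta> ^ (m - 1)) * mgf MY (Y a1) (lam a1) *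
                 (\<integral>\<^sup>+ w. cond_laplace kern (lam a1) a1 w \<partial>(distr M S (W [])))"
      by (simp add: G_def cc_def mult_left_mono)
  qed
qed

end
theorem mainTheorem2:
  fixes M :: "'a measure" and S :: "'s measure" and kern :: "'s \<Rightarrow> (nat \<Rightarrow> real) measure"
    and W :: "nat list \<Rightarrow> 'a \<Rightarrow> 's" and X :: "nat list \<Rightarrow> 'a \<Rightarrow> real"
    and MY :: "'b measure" and Y :: "nat \<Rightarrow> 'b \<Rightarrow> real" and lam :: "nat \<Rightarrow> real"
  assumes "cmj_standing M S kern W X"
    and "assumption_A M S kern W X MY Y lam"
  shows "\<exists>\<zeta>::real. \<zeta> < 1 \<and> (\<exists>K::real. K > 0 \<and>
           (\<forall>(a1::nat) (m::nat). real a1 > K \<longrightarrow> m \<ge> 1 \<longrightarrow>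
              (\<Sum>a\<in>{a. a \<in> tree_nodes \<and> length a = m \<and> hd a = a1 \<and> conservative a}.
                  emeasure M {\<omega>\<in>space M. children_before X a a1 [] \<omega>})
              \<le> ennreal (\<zeta> ^ (m - 1)) * mgf MY (Y a1) (lam a1) *
                 (\<integral>\<^sup>+ w. cond_laplace kern (lam a1) a1 w \<partial>(distr M S (W [])))))"
proof -
  interpret cmjA M S kern W X MY Y lam
    using assms by (simp add: cmjA_def cmj_def cmjA_axioms_def)
  show ?thesis by (rule final)
qed

end
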